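(* Let $\mathbf{X}$ be a Banach space, $\mathcal{S}\subset\mathbf{X}$, let $\mathbb{P}$ be a Borel probability measure on $\mathcal{S}$ that is critical for $\mathcal{S}$ with respect to $\mathbf{X}$, and set $s^\ast := s^\ast_{\mathbf{X}}(\mathcal{S})$. Then: (i) Let $s>s^\ast$ and let $c=c(s)>0$, $\varepsilon_0=\varepsilon_0(s)>0$ be constants with $\mathbb{P}(\mathcal{S}\cap\mathcal{B}(\mathbf{x},\varepsilon;\mathbf{X}))\le 2^{-c\varepsilon^{-1/s}}$ for all $\mathbf{x}\in\mathbf{X}$ and $\varepsilon\in(0,\varepsilon_0)$. Then for any $R\in\mathbb{N}$ and any encoder/decoder pair $(E_R,D_R)$ of code-length $R$, \[\mathbb{P}^\ast(\{\mathbf{x}\in\mathcal{S}:\|\mathbf{x}-D_R(E_R(\mathbf{x}))\|_{\mathbf{X}}\le\varepsilon\})\le 2^{R-c\varepsilon^{-1/s}}\qquad\forall\varepsilon\in(0,\varepsilon_0).\] (ii) For every $s>s^\ast$ and every codec $\mathcal{C}$, $\mathbb{P}^\ast(\mathcal{A}^s_{\mathcal{S},\mathbf{X}}(\mathcal{C}))=0$. (iii) For every $0\le s<s^\ast$ there is a codec $\mathcal{C}=((E_R,D_R))_{R\in\mathbb{N}}$ and a constant $C>0$ with $\delta_{\mathcal{S},\mathbf{X}}(E_R,D_R)\le C\cdot R^{-s}$ for all $R\in\mathbb{N}$; in particular $\mathcal{A}^s_{\mathcal{S},\mathbf{X}}(\mathcal{C})=\mathcal{S}$ and $\mathbb{P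}(\mathcal{A}^s_{\mathcal{S},\mathbf{X}}(\mathcal{C}))=1$.
   Context: Let $(\mathbf{X},\|\cdot\|_{\mathbf{X}})$ be a real Banach space and $\mathcal{S}\subset\mathbf{X}$. An encoder/decoder pair of code-length $R\in\mathbb{N}$ is a pair $(E,D)$ with $E:\mathcal{S}\to\{0,1\}^R$, $D:\{0,1\}^R\to\mathbf{X}$; its distortion is $\delta_{\mathcal{S},\mathbf{X}}(E,D)=\sup_{\mathbf{x}\in\mathcal{S}}\|\mathbf{x}-D(E(\mathbf{x}))\|_{\mathbf{X}}$. A codec is a sequence $\mathcal{C}=((E_R,D_R))_{R\in\mathbb{N}}$ with $(E_R,D_R)$ of code-length $R$. The optimal compression rate is $s^\ast_{\mathbf{X}}(\mathcal{S})=\sup\{s\ge0:\exists\text{ codec with }\sup_R R^s\delta_{\mathcal{S},\mathbf{X}}(E_R,D_R)<\infty\}$. For $s\ge0$, $\mathcal{A}^s_{\mathcal{S},\mathbf{X}}(\mathcal{C})=\{\mathbf{x}\in\mathcal{S}:\sup_R R^s\|\mathbf{x}-D_R(E_R(\mathbf{x}))\|_{\mathbf{X}}<\infty\}$. $\mathcal{S}$ carries the trace $\sigma$-algebra $\{\mathcal{S}\cap B: B\text{ Borel in }\mathbf{X}\}$; Borel probability measures on $\mathcal{S}$ are probability measures on it, and $\mathbb{P}^\ast(M)=\inf\{\sum_n\mathbb{P}(M_n): M_n\text{ measurable}, M\subset\bigcup_nM_n\}$. $\mathcal{B}(\mathbf{x},\varepsilon;\mathbf{X})$ is the closed ball. A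 Borel probability measure $\mathbb{P}$ on $\mathcal{S}$ has (logarithmic) growth order $s_0\in[0,\infty)$ w.r.t. $\mathbf{X}$ if for every $s>s_0$ there exist $\varepsilon_0,c>0$ with $\mathbb{P}(\mathcal{S}\cap\mathcal{B}(\mathbf{x},\varepsilon;\mathbf{X}))\le2^{-c\varepsilon^{-1/s}}$ for all $\mathbf{x}\in\mathbf{X}$, $\varepsilon\in(0,\varepsilon_0)$. $\mathbb{P}$ is critical for $\mathcal{S}$ w.r.t. $\mathbf{X}$ if it has growth order $s^\ast_{\mathbf{X}}(\mathcal{S})$. *)

theory Defs
  imports "HOL-Probability.Probability"
begin

text \<open>Codewords in {0,1}^R are bit lists of length R. Natural numbers R range over R \<ge> 1.\<close>

definition enc_dec_pair :: "'a set \<Rightarrow> nat \<Rightarrow> ('a \<Rightarrow> bool list) \<Rightarrow> (bool list \<Rightarrow> 'a) \<Rightarrow> bool" where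
  "enc_dec_pair S R E D \<longleftrightarrow> (\<forall>x\<in>S. length (E x) = R)"

definition distortion :: "'a::real_normed_vector set \<Rightarrow> ('a \<Rightarrow> bool list) \<Rightarrow> (bool list \<Rightarrow> 'a) \<Rightarrow> ereal" where
  "distortion S E D = (SUP x\<in>S. ereal (norm (x - D (E x))))"

definition is_codec :: "'a set \<Rightarrow> (nat \<Rightarrow> 'a \<Rightarrow> bool list) \<Rightarrow> (nat \<Rightarrow> bool list \<Rightarrow> 'a) \<Rightarrow> bool" where
  "is_codec S E D \<longleftrightarrow> (\<forall>R\<ge>1. enc_dec_pair S R (E R) (D R))"

text \<open>Optimal compression rate; the supremum of the empty set is taken to be 0.\<close>
definition opt_rate :: "'a::real_normed_vector set \<Rightarrow> ereal" where
  "opt_rate S = Sup (insert 0 {ereal s | s. s \<ge> 0 \<and> (\<exists>E D. is_codec S E D \<and>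
      (\<exists>C::real. \<forall>R\<ge>(1::nat). ereal (real R powr s) * distortion S (E R) (D R) \<le> ereal C))})"

definition approx_class :: "'a::real_normed_vector set \<Rightarrow> real \<Rightarrow> (nat \<Rightarrow> 'a \<Rightarrow> bool list) \<Rightarrow> (nat \<Rightarrow> bool list \<Rightarrow> 'a) \<Rightarrow> 'a set" where
  "approx_class S s E D = {x\<in>S. \<exists>C::real. \<forall>R\<ge>(1::nat). real R powr s * norm (x - D R (E R x)) \<le> C}"

definition outer_prob :: "'a measure \<Rightarrow> 'a set \<Rightarrow> ennreal" where
  "outer_prob M A = (INF B \<in> {B::nat \<Rightarrow> 'a set. range B \<subseteq> sets M \<and> A \<subseteq> (\<Union>n. B n)}. \<Sum>n. emeasure M (B n))"

definition growth_order :: "'a::real_normed_vector measure \<Rightarrow> 'a set \<Rightarrow> real \<Rightarrow> bool" where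
  "growth_order M S s0 \<longleftrightarrow> s0 \<ge> 0 \<and> (\<forall>s>s0. \<exists>\<epsilon>0>0. \<exists>c>0. \<forall>x \<epsilon>. 0 < \<epsilon> \<and> \<epsilon> < \<epsilon>0 \<longrightarrow>
      measure M (S \<inter> cball x \<epsilon>) \<le> 2 powr (- c * \<epsilon> powr (-1/s)))"

definition critical :: "'a::real_normed_vector measure \<Rightarrow> 'a set \<Rightarrow> bool" where
  "critical M S \<longleftrightarrow> (\<exists>s0. opt_rate S = ereal s0 \<and> growth_order M S s0)"

end

theory Submission
  imports Defs "HOL-Real_Asymp.Real_Asymp"
begin

lemma lim1:
  assumes "k>0" "c>0" "s > t" "t > 0"
  shows "((\<lambda>R::nat. 2 ^ R * 2 powr (- c * (k * real R powr (-s)) powr (-1/t))) \<longlongrightarrow> 0) sequentially"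
  using assms by real_asymp

lemma lim2:
  assumes "k>0" "s>0"
  shows "((\<lambda>R::nat. k * real R powr (-s)) \<longlongrightarrow> 0) sequentially"
  using assms by real_asymp

lemma space_eqS:
  assumes "sets M = sets (restrict_space borel S)"
  shows "space M = S"
  using sets_eq_imp_space_eq[OF assms] by (simp add: space_restrict_space)

lemma ball_sets:
  assumes "sets M = sets (restrict_space borel S)"
  shows "S \<inter> cball y e \<in> sets M"
  using assms by (auto simp: sets_restrict_space)

lemma outer_le:
  assumes "A \<subseteq> U" "U \<in> sets M"
  shows "outer_prob M A \<le> emeasure M U"
proof -
  define B where "B = (\<lambda>n::nat. if n = 0 then U else {})"
  have "B \<in> {B::nat \<Rightarrow> 'a set. range B \<subseteq> sets M \<and> A \<subseteq> (\<Union>n. B n)}"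
    using assms by (auto simp: B_def)
  hence "outer_prob M A \<le> (\<Sum>n. emeasure M (B n))"
    unfolding outer_prob_def by (rule INF_lower)
  also have "(\<Sum>n. emeasure M (B n)) = (\<Sum>n\<in>{0}. emeasure M (B n))"
    by (rule suminf_finite) (auto simp: B_def)
  also have "\<dots> = emeasure M U" by (simp add: B_def)
  finally show ?thesis .
qed

lemma union_bound:
  assumes P: "prob_space M" and SM: "sets M = sets (restrict_space borel S)"
    and b: "\<And>w. length w = R \<Longrightarrow> measure M (S \<inter> cball (D w) e) \<le> b"
  shows "(\<Union>w\<in>{w::bool list. length w = R}. S \<inter> cball (D w) e) \<in> sets M"
    and "measure M (\<Union>w\<in>{w::bool list. length w = R}. S \<inter> cball (D w) e) \<le> 2 ^ R * b"
proof -
  have fin: "finite {w::bool list. length w = R}" using finite_list_length by fastforce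
  have card: "card {xs::bool list. length xs = R} = 2^R"
    using card_lists_length_eq[of "UNIV::bool set" R] by simp
  show "(\<Union>w\<in>{w::bool list. length w = R}. S \<inter> cball (D w) e) \<in> sets M"
    using fin ball_sets[OF SM] by (intro sets.finite_UN) auto
  have "measure M (\<Union>w\<in>{w::bool list. length w = R}. S \<inter> cball (D w) e)
     \<le> (\<Sum>w\<in>{w::bool list. length w = R}. measure M (S \<inter> cball (D w) e))"
    using fin ball_sets[OF SM] by (intro measure_UNION_le) auto
  also have "\<dots> \<le> (\<Sum>w\<in>{w::bool list. length w = R}. b)"
    using b by (intro sum_mono) auto
  also have "\<dots> = 2 ^ R * b" using card by simp
  finally show "measure M (\<Union>w\<in>{w::bool list. length w = R}. S \<inter> cball (D w) e) \<le> 2 ^ R * b" .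
qed

lemma cover:
  assumes "x \<in> S" "length (E x) = R" "norm (x - D (E x)) \<le> e"
  shows "x \<in> (\<Union>w\<in>{w::bool list. length w = R}. S \<inter> cball (D w) e)"
  using assms by (auto simp: dist_norm norm_minus_commute intro!: bexI[of _ "E x"])

theorem theorem2p2:
  fixes S :: "'a::banach set" and M :: "'a measure"
  assumes "prob_space M" and "sets M = sets (restrict_space borel S)"
    and "critical M S"
  shows
   "(\<forall>s c \<epsilon>0 R E D. ereal s > opt_rate S \<and> c > 0 \<and> \<epsilon>0 > 0 \<and>
        (\<forall>x \<epsilon>. 0 < \<epsilon> \<and> \<epsilon> < \<epsilon>0 \<longrightarrow> measure M (S \<inter> cball x \<epsilon>) \<le> 2 powr (- c * \<epsilon> powr (-1/s))) \<and>
        R \<ge> 1 \<and> enc_dec_pair S R E D \<longrightarrow>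
        (\<forall>\<epsilon>. 0 < \<epsilon> \<and> \<epsilon> < \<epsilon>0 \<longrightarrow>
           outer_prob M {x\<in>S. norm (x - D (E x)) \<le> \<epsilon>} \<le> ennreal (2 powr (real R - c * \<epsilon> powr (-1/s)))))
  \<and> (\<forall>s E D. ereal s > opt_rate S \<and> is_codec S E D \<longrightarrow> outer_prob M (approx_class S s E D) = 0)
  \<and> (\<forall>s. 0 \<le> s \<and> ereal s < opt_rate S \<longrightarrow>
        (\<exists>E D. is_codec S E D \<and>
           (\<exists>C>0. \<forall>R\<ge>(1::nat). distortion S (E R) (D R) \<le> ereal (C * real R powr (- s))) \<and>
           approx_class S s E D = S \<and> measure M (approx_class S s E D) = 1))"
proof (intro conjI allI impI)
  note P = assms(1) and SM = assms(2)
  interpret prob_space M by (rule P)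
  have spS: "space M = S" by (rule space_eqS[OF SM])
  {
    fix s c \<epsilon>0 R E D \<epsilon>
    assume H: "ereal s > opt_rate S \<and> c > 0 \<and> \<epsilon>0 > 0 \<and>
        (\<forall>x \<epsilon>. 0 < \<epsilon> \<and> \<epsilon> < \<epsilon>0 \<longrightarrow> measure M (S \<inter> cball x \<epsilon>) \<le> 2 powr (- c * \<epsilon> powr (-1/s))) \<and>
        R \<ge> 1 \<and> enc_dec_pair S R E D"
      and e: "0 < \<epsilon> \<and> \<epsilon> < \<epsilon>0"
    let ?U = "\<Union>w\<in>{w::bool list. length w = R}. S \<inter> cball (D w) \<epsilon>"
    have b: "\<And>w. length w = R \<Longrightarrow> measure M (S \<inter> cball (D w) \<epsilon>) \<le> 2 powr (- c * \<epsilon> powr (-1/s))"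
      using H e by blast
    note ub = union_bound[OF P SM b]
    have "outer_prob M {x\<in>S. norm (x - D (E x)) \<le> \<epsilon>} \<le> emeasure M ?U"
    proof (rule outer_le[OF _ ub(1)])
      show "{x\<in>S. norm (x - D (E x)) \<le> \<epsilon>} \<subseteq> ?U"
      proof
        fix x assume x: "x \<in> {x\<in>S. norm (x - D (E x)) \<le> \<epsilon>}"
        have "length (E x) = R" using H x by (auto simp: enc_dec_pair_def)
        thus "x \<in> ?U" using x by (intro cover) auto
      qed
    qed
    also have "\<dots> = ennreal (measure M ?U)" by (simp add: emeasure_eq_measure)
    also have "\<dots> \<le> ennreal (2 ^ R * 2 powr (- c * \<epsilon> powr (-1/s)))"
      using ub(2) by (rule ennreal_leI)
    also have "2 ^ R * 2 powr (- c * \<epsilon> powr (-1/s)) = (2::real) powr (real R - c * \<epsilon> powr (-1/s))"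
      by (simp add: powr_diff powr_realpow divide_inverse powr_minus)
    finally show "outer_prob M {x\<in>S. norm (x - D (E x)) \<le> \<epsilon>} \<le> ennreal (2 powr (real R - c * \<epsilon> powr (-1/s)))" .
  }
  {
    fix s E D
    assume H: "ereal s > opt_rate S \<and> is_codec S E D"
    from assms(3) obtain s0 where s0: "opt_rate S = ereal s0" "growth_order M S s0"
      unfolding critical_def by blast
    have s0s: "s0 < s" using H s0 by simp
    have s00: "s0 \<ge> 0" using s0(2) by (simp add: growth_order_def)
    define t where "t = (s0 + s) / 2"
    have t: "s0 < t" "t < s" "t > 0" "s > 0" using s0s s00 by (auto simp: t_def)
    obtain \<epsilon>0 c where ec: "\<epsilon>0 > 0" "c > 0"
      "\<And>x \<epsilon>. 0 < \<epsilon> \<and> \<epsilon> < \<epsilon>0 \<Longrightarrow> measure M (S \<inter> cball x \<epsilon>) \<le> 2 powr (- c * \<epsilon> powr (-1/t))"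
      using s0(2) t(1) unfolding growth_order_def by blast
    define U where "U = (\<lambda>(n::nat) (R::nat). \<Union>w\<in>{w::bool list. length w = R}. S \<inter> cball (D R w) (real n * real R powr (-s)))"
    define V where "V = (\<lambda>n. \<Inter>R\<in>{1::nat..}. U n R)"
    have Usets: "U n R \<in> sets M" for n R
    proof -
      have fin: "finite {w::bool list. length w = R}" using finite_list_length by fastforce
      show ?thesis unfolding U_def using fin ball_sets[OF SM] by (intro sets.finite_UN) auto
    qed
    have Vnull: "V n \<in> null_sets M" if n: "n \<ge> 1" for n
    proof -
      have Vsets: "V n \<in> sets M" unfolding V_def
        using Usets by (intro sets.countable_INT') auto
      have k: "real n > 0" using n by simp
      have ev1: "eventually (\<lambda>R. real n * real R powr (-s) < \<epsilon>0) sequentially"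
        using order_tendstoD(2)[OF lim2[OF k t(4)] ec(1)] .
      have ev: "eventually (\<lambda>R. measure M (V n) \<le> 2 ^ R * 2 powr (- c * (real n * real R powr (-s)) powr (-1/t))) sequentially"
        using ev1 eventually_ge_at_top[of "1::nat"]
      proof eventually_elim
        case (elim R)
        have e0: "0 < real n * real R powr (-s)" using k elim(2) by simp
        have "measure M (V n) \<le> measure M (U n R)"
          using elim(2) Usets by (intro finite_measure_mono) (auto simp: V_def)
        also have "\<dots> \<le> 2 ^ R * 2 powr (- c * (real n * real R powr (-s)) powr (-1/t))"
          unfolding U_def using e0 elim(1) ec(3)
          by (intro union_bound(2)[OF P SM]) auto
        finally show ?case .
      qed
      have "measure M (V n) \<le> 0"
        by (rule tendsto_le[OF _ lim1[OF k ec(2) t(2) t(3)] tendsto_const]) (use ev in auto)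
      hence "measure M (V n) = 0" using measure_nonneg[of M "V n"] by linarith
      thus ?thesis using Vsets by (simp add: null_sets_def emeasure_eq_measure)
    qed
    have nullU: "(\<Union>n\<in>{1::nat..}. V n) \<in> null_sets M"
      using Vnull by (intro null_sets_UN') auto
    have sub: "approx_class S s E D \<subseteq> (\<Union>n\<in>{1::nat..}. V n)"
    proof
      fix x assume "x \<in> approx_class S s E D"
      then obtain C where x: "x \<in> S" "\<And>R. R \<ge> 1 \<Longrightarrow> real R powr s * norm (x - D R (E R x)) \<le> C"
        unfolding approx_class_def by blast
      define n where "n = nat \<lceil>C\<rceil> + 1"
      have n1: "n \<ge> 1" and nC: "C \<le> real n" unfolding n_def by linarith+
      have "x \<in> U n R" if R: "R \<ge> 1" for R
      proof -
        have pos: "real R powr s > 0" using R by simp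
        have "real R powr s * norm (x - D R (E R x)) \<le> real n" using x(2)[OF R] nC by linarith
        hence "norm (x - D R (E R x)) \<le> real n / real R powr s"
          using pos by (simp add: field_simps)
        hence "norm (x - D R (E R x)) \<le> real n * real R powr (-s)"
          by (simp add: powr_minus divide_inverse)
        moreover have "length (E R x) = R" using H x(1) R by (auto simp: is_codec_def enc_dec_pair_def)
        ultimately show ?thesis unfolding U_def using x(1) by (intro cover[of x S "E R" R "D R"]) auto
      qed
      thus "x \<in> (\<Union>n\<in>{1::nat..}. V n)" using n1 by (auto simp: V_def)
    qed
    have "outer_prob M (approx_class S s E D) \<le> emeasure M (\<Union>n\<in>{1::nat..}. V n)"
      using nullU sub by (intro outer_le) auto
    also have "\<dots> = 0" using nullU by (simp add: null_sets_def)
    finally show "outer_prob M (approx_class S s E D) = 0" by simp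
  }
  {
    fix s :: real
    assume H: "0 \<le> s \<and> ereal s < opt_rate S"
    then obtain y where y: "y \<in> insert 0 {ereal s | s. s \<ge> 0 \<and> (\<exists>E D. is_codec S E D \<and>
      (\<exists>C::real. \<forall>R\<ge>(1::nat). ereal (real R powr s) * distortion S (E R) (D R) \<le> ereal C))}" "ereal s < y"
      unfolding opt_rate_def using less_Sup_iff by blast
    then obtain s' E D C where s': "y = ereal s'" "s' \<ge> 0" "is_codec S E D"
      "\<And>R. R \<ge> 1 \<Longrightarrow> ereal (real R powr s') * distortion S (E R) (D R) \<le> ereal C"
      using H by (auto simp: zero_ereal_def)
    have ss': "s < s'" using y(2) s'(1) by simp
    define C' where "C' = max C 1"
    have dist: "distortion S (E R) (D R) \<le> ereal (C' * real R powr (- s))" if R: "R \<ge> 1" for R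
    proof -
      have pos: "real R powr s' > 0" using R by simp
      have "ereal (real R powr s') * distortion S (E R) (D R) \<le> ereal C" using s'(4)[OF R] .
      hence "distortion S (E R) (D R) \<le> ereal (C / real R powr s')"
        using pos by (cases "distortion S (E R) (D R)") (auto simp: field_simps)
      also have "C / real R powr s' \<le> C' * real R powr (- s)"
      proof -
        have "C / real R powr s' \<le> C' / real R powr s'"
          using pos by (intro divide_right_mono) (auto simp: C'_def)
        also have "\<dots> \<le> C' / real R powr s"
          using R ss' H by (intro divide_left_mono powr_mono) (auto simp: C'_def)
        finally show ?thesis by (simp add: powr_minus divide_inverse)
      qed
      finally show ?thesis by simp
    qed
    have AC: "approx_class S s E D = S"
    proof -
      have "\<exists>C. \<forall>R\<ge>(1::nat). real R powr s * norm (x - D R (E R x)) \<le> C" if x: "x \<in> S" for x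
      proof (intro exI allI impI)
        fix R :: nat assume R: "R \<ge> 1"
        have "ereal (norm (x - D R (E R x))) \<le> distortion S (E R) (D R)"
          unfolding distortion_def using x by (rule SUP_upper)
        also note dist[OF R]
        finally have "norm (x - D R (E R x)) \<le> C' * real R powr (- s)" by simp
        hence "real R powr s * norm (x - D R (E R x)) \<le> real R powr s * (C' * real R powr (- s))"
          by (intro mult_left_mono) auto
        also have "\<dots> = C'" using R by (simp add: powr_minus field_simps)
        finally show "real R powr s * norm (x - D R (E R x)) \<le> C'" .
      qed
      thus ?thesis unfolding approx_class_def by blast
    qed
    show "\<exists>E D. is_codec S E D \<and>
           (\<exists>C>0. \<forall>R\<ge>(1::nat). distortion S (E R) (D R) \<le> ereal (C * real R powr (- s))) \<and>
           approx_class S s E D = S \<and> measure M (approx_class S s E D) = 1"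
      using s'(3) dist AC prob_space spS by (intro exI[of _ E] exI[of _ D]) (auto simp: C'_def intro!: exI[of _ C'])
  }
qed

end
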